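(* Let $(\mathbf{H},m,\Delta)$ be a commutative and cocommutative (connected) set Hopf monoid, with each $\mathbf{H}[I]$ equipped with the reassembly partial order $\le_r$ (so that $\mathbf{H}$ is a self-adjoint poset Hopf monoid). Let $I=S\sqcup T$, $x\in\mathbf{H}[S]$ and $y\in\mathbf{H}[T]$. Then $\omega_x\cdot\omega_y=\omega_{x\cdot y}$ in $\mathbf{k}\mathbf{H}[I]$, where $x\cdot y=m_{S,T}(x,y)$ and, for $z\in\mathbf{H}[J]$, $\omega_z=\sum_{z\le_r w}\mu(z,w)\,w$ with $\mu$ the Möbius function of $(\mathbf{H}[J],\le_r)$.
   Context: $\mathbf{k}$ is a field of characteristic $0$. A (connected) set species $\mathbf{H}$ assigns to each finite set $I$ a finite set $\mathbf{H}[I]$, $\mathbf{H}[\emptyset]=\{1\}$, and bijections functorially to bijections. A set Hopf monoid has maps $m_{S,T}:\mathbf{H}[S]\times\mathbf{H}[T]\to\mathbf{H}[S\sqcup T]$ (natural, associative, unital) and $\Delta_{S,T}:\mathbf{H}[S\sqcup T]\to\mathbf{H}[S]\times\mathbf{H}[T]$ (natural, coassociative, counital), satisfying compatibility: for $I=S_1\sqcup S_2=T_1\sqcup T_2$, $A=S_1\cap T_1$, $B=S_1\cap T_2$, $C=S_2\cap T_1$, $D=S_2\cap T_2$, if $\Delta_{A,B}(x)=(x_A,x_B)$, $\Delta_{C,D}(y)=(y_C,y_D)$ then $\Delta_{T_1,T_2}(m_{S_1,S_2}(x,y))=(m_{A,C}(x_A,y_C),m_{B,D}(x_B,y_D))$.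 Commutative: $m_{S,T}(x,y)=m_{T,S}(y,x)$; cocommutative: $\Delta_{S,T}(x)=(y,z)\iff\Delta_{T,S}(x)=(z,y)$. Reassembly order: $x\le_r y$ in $\mathbf{H}[I]$ iff $y=m_{S_1,\dots,S_k}\circ\Delta_{S_1,\dots,S_k}(x)$ for some set partition $S_1\sqcup\dots\sqcup S_k=I$ (iterated maps via (co)associativity); for commutative cocommutative $\mathbf{H}$ this is a partial order. $\mathbf{k}\mathbf{H}[I]$ is the vector space with basis $\mathbf{H}[I]$, multiplication extended bilinearly. *)

theory Defs
  imports Main "HOL-Library.Disjoint_Sets"
begin

text \<open>A set species with labels of type 'l and structures of type 'e:
  H I is the set of H-structures on the finite set I; rl s I is the transport
  of structures along the bijection s restricted to I (from I onto s ` I).\<close>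

definition set_species :: "('l set \<Rightarrow> 'e set) \<Rightarrow> (('l \<Rightarrow> 'l) \<Rightarrow> 'l set \<Rightarrow> 'e \<Rightarrow> 'e) \<Rightarrow> bool" where
  "set_species H rl \<longleftrightarrow>
     (\<forall>I. finite I \<longrightarrow> finite (H I)) \<and>
     (\<exists>e. H {} = {e}) \<and>
     (\<forall>s I x. finite I \<and> inj_on s I \<and> x \<in> H I \<longrightarrow> rl s I x \<in> H (s ` I)) \<and>
     (\<forall>s t I x. finite I \<and> (\<forall>i\<in>I. s i = t i) \<and> x \<in> H I \<longrightarrow> rl s I x = rl t I x) \<and>
     (\<forall>I x. finite I \<and> x \<in> H I \<longrightarrow> rl id I x = x) \<and>
     (\<forall>s t I x. finite I \<and> inj_on s I \<and> inj_on t (s ` I) \<and> x \<in> H I \<longrightarrow>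
         rl t (s ` I) (rl s I x) = rl (t \<circ> s) I x)"

definition unit_elem :: "('l set \<Rightarrow> 'e set) \<Rightarrow> 'e" where
  "unit_elem H = the_elem (H {})"

definition set_hopf_monoid ::
  "('l set \<Rightarrow> 'e set) \<Rightarrow> (('l \<Rightarrow> 'l) \<Rightarrow> 'l set \<Rightarrow> 'e \<Rightarrow> 'e)
   \<Rightarrow> ('l set \<Rightarrow> 'l set \<Rightarrow> 'e \<Rightarrow> 'e \<Rightarrow> 'e) \<Rightarrow> ('l set \<Rightarrow> 'l set \<Rightarrow> 'e \<Rightarrow> 'e \<times> 'e) \<Rightarrow> bool" where
  "set_hopf_monoid H rl m D \<longleftrightarrow>
     set_species H rl \<and>
     \<comment> \<open>well-definedness of m and D\<close>
     (\<forall>S T x y. finite S \<and> finite T \<and> S \<inter> T = {} \<and> x \<in> H S \<and> y \<in> H T \<longrightarrow>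
        m S T x y \<in> H (S \<union> T)) \<and>
     (\<forall>S T x. finite S \<and> finite T \<and> S \<inter> T = {} \<and> x \<in> H (S \<union> T) \<longrightarrow>
        fst (D S T x) \<in> H S \<and> snd (D S T x) \<in> H T) \<and>
     \<comment> \<open>naturality\<close>
     (\<forall>s S T x y. finite S \<and> finite T \<and> S \<inter> T = {} \<and> inj_on s (S \<union> T) \<and> x \<in> H S \<and> y \<in> H T \<longrightarrow>
        rl s (S \<union> T) (m S T x y) = m (s ` S) (s ` T) (rl s S x) (rl s T y)) \<and>
     (\<forall>s S T x. finite S \<and> finite T \<and> S \<inter> T = {} \<and> inj_on s (S \<union> T) \<and> x \<in> H (S \<union> T) \<longrightarrow>
        D (s ` S) (s ` T) (rl s (S \<union> T) x) = (rl s S (fst (D S T x)), rl s T (snd (D S T x)))) \<and>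
     \<comment> \<open>unitality and counitality\<close>
     (\<forall>I x. finite I \<and> x \<in> H I \<longrightarrow>
        m {} I (unit_elem H) x = x \<and> m I {} x (unit_elem H) = x) \<and>
     (\<forall>I x. finite I \<and> x \<in> H I \<longrightarrow>
        D {} I x = (unit_elem H, x) \<and> D I {} x = (x, unit_elem H)) \<and>
     \<comment> \<open>associativity\<close>
     (\<forall>R S T x y z. finite R \<and> finite S \<and> finite T \<and> R \<inter> S = {} \<and> R \<inter> T = {} \<and> S \<inter> T = {}
        \<and> x \<in> H R \<and> y \<in> H S \<and> z \<in> H T \<longrightarrow>
        m (R \<union> S) T (m R S x y) z = m R (S \<union> T) x (m S T y z)) \<and>
     \<comment> \<open>coassociativity\<close>
     (\<forall>R S T x. finite R \<and> finite S \<and> finite T \<and> R \<inter> S = {} \<and> R \<inter> T = {} \<and> S \<inter> T = {}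
        \<and> x \<in> H (R \<union> S \<union> T) \<longrightarrow>
        (let (a, w) = D (R \<union> S) T x; (u, v) = D R S a in (u, v, w)) =
        (let (u, b) = D R (S \<union> T) x; (v, w) = D S T b in (u, v, w))) \<and>
     \<comment> \<open>compatibility\<close>
     (\<forall>S1 S2 T1 T2 x y. finite S1 \<and> finite S2 \<and> finite T1 \<and> finite T2 \<and>
        S1 \<inter> S2 = {} \<and> T1 \<inter> T2 = {} \<and> S1 \<union> S2 = T1 \<union> T2 \<and> x \<in> H S1 \<and> y \<in> H S2 \<longrightarrow>
        (let A = S1 \<inter> T1; B = S1 \<inter> T2; C = S2 \<inter> T1; E = S2 \<inter> T2 in
          D T1 T2 (m S1 S2 x y) =
            (m A C (fst (D A B x)) (fst (D C E y)), m B E (snd (D A B x)) (snd (D C E y)))))"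

definition commutative_shm :: "('l set \<Rightarrow> 'e set) \<Rightarrow> ('l set \<Rightarrow> 'l set \<Rightarrow> 'e \<Rightarrow> 'e \<Rightarrow> 'e) \<Rightarrow> bool" where
  "commutative_shm H m \<longleftrightarrow>
     (\<forall>S T x y. finite S \<and> finite T \<and> S \<inter> T = {} \<and> x \<in> H S \<and> y \<in> H T \<longrightarrow> m S T x y = m T S y x)"

definition cocommutative_shm :: "('l set \<Rightarrow> 'e set) \<Rightarrow> ('l set \<Rightarrow> 'l set \<Rightarrow> 'e \<Rightarrow> 'e \<times> 'e) \<Rightarrow> bool" where
  "cocommutative_shm H D \<longleftrightarrow>
     (\<forall>S T x. finite S \<and> finite T \<and> S \<inter> T = {} \<and> x \<in> H (S \<union> T) \<longrightarrow> D T S x = prod.swap (D S T x))"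

fun mult_it :: "('l set \<Rightarrow> 'l set \<Rightarrow> 'e \<Rightarrow> 'e \<Rightarrow> 'e) \<Rightarrow> 'e \<Rightarrow> 'l set list \<Rightarrow> 'e list \<Rightarrow> 'e" where
  "mult_it m e [] xs = e"
| "mult_it m e (S # Ss) xs = m S (\<Union>(set Ss)) (hd xs) (mult_it m e Ss (tl xs))"

fun comult_it :: "('l set \<Rightarrow> 'l set \<Rightarrow> 'e \<Rightarrow> 'e \<times> 'e) \<Rightarrow> 'l set list \<Rightarrow> 'e \<Rightarrow> 'e list" where
  "comult_it D [] x = []"
| "comult_it D (S # Ss) x = fst (D S (\<Union>(set Ss)) x) # comult_it D Ss (snd (D S (\<Union>(set Ss)) x))"

definition reassembly_le ::
  "('l set \<Rightarrow> 'e set) \<Rightarrow> ('l set \<Rightarrow> 'l set \<Rightarrow> 'e \<Rightarrow> 'e \<Rightarrow> 'e) \<Rightarrow> ('l set \<Rightarrow> 'l set \<Rightarrow> 'e \<Rightarrow> 'e \<times> 'e)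
   \<Rightarrow> 'l set \<Rightarrow> 'e \<Rightarrow> 'e \<Rightarrow> bool" where
  "reassembly_le H m D I x y \<longleftrightarrow> x \<in> H I \<and>
     (\<exists>Ss. distinct Ss \<and> partition_on I (set Ss) \<and>
        y = mult_it m (unit_elem H) Ss (comult_it D Ss x))"

definition moebius :: "('a \<Rightarrow> 'a \<Rightarrow> bool) \<Rightarrow> 'a set \<Rightarrow> 'a \<Rightarrow> 'a \<Rightarrow> int" where
  "moebius le A = (THE f.
     (\<forall>x y. f x y \<noteq> 0 \<longrightarrow> x \<in> A \<and> y \<in> A \<and> le x y) \<and>
     (\<forall>x\<in>A. \<forall>y\<in>A. le x y \<longrightarrow>
        (\<Sum>z\<in>{z\<in>A. le x z \<and> le z y}. f x z) = (if x = y then 1 else 0)))"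

text \<open>Elements of kH[I] are coefficient functions supported on H[I].\<close>
definition kmult :: "('l set \<Rightarrow> 'e set) \<Rightarrow> ('l set \<Rightarrow> 'l set \<Rightarrow> 'e \<Rightarrow> 'e \<Rightarrow> 'e)
   \<Rightarrow> 'l set \<Rightarrow> 'l set \<Rightarrow> ('e \<Rightarrow> 'k::field) \<Rightarrow> ('e \<Rightarrow> 'k) \<Rightarrow> ('e \<Rightarrow> 'k)" where
  "kmult H m S T f g = (\<lambda>w. \<Sum>(a, b)\<in>H S \<times> H T. if m S T a b = w then f a * g b else 0)"

definition omega :: "('l set \<Rightarrow> 'e set) \<Rightarrow> ('l set \<Rightarrow> 'l set \<Rightarrow> 'e \<Rightarrow> 'e \<Rightarrow> 'e)
   \<Rightarrow> ('l set \<Rightarrow> 'l set \<Rightarrow> 'e \<Rightarrow> 'e \<times> 'e) \<Rightarrow> 'l set \<Rightarrow> 'e \<Rightarrow> ('e \<Rightarrow> 'k::field)" where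
  "omega H m D J z = (\<lambda>w. if w \<in> H J \<and> reassembly_le H m D J z w
       then of_int (moebius (reassembly_le H m D J) (H J) z w) else 0)"

end

theory Submission
  imports Defs "HOL-Library.Disjoint_Sets"
begin



definition po :: "('a \<Rightarrow> 'a \<Rightarrow> bool) \<Rightarrow> 'a set \<Rightarrow> bool" where
  "po le A \<longleftrightarrow> finite A \<and> (\<forall>x y. le x y \<longrightarrow> x \<in> A \<and> y \<in> A) \<and> (\<forall>x\<in>A. le x x)
     \<and> (\<forall>x y z. le x y \<longrightarrow> le y z \<longrightarrow> le x z) \<and> (\<forall>x y. le x y \<longrightarrow> le y x \<longrightarrow> x = y)"

definition iv :: "('a \<Rightarrow> 'a \<Rightarrow> bool) \<Rightarrow> 'a set \<Rightarrow> 'a \<Rightarrow> 'a \<Rightarrow> 'a set" where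
  "iv le A x y = {z\<in>A. le x z \<and> le z y}"

lemma po_fin: "po le A \<Longrightarrow> finite A" unfolding po_def by blast
lemma po_dom: "po le A \<Longrightarrow> le x y \<Longrightarrow> x \<in> A \<and> y \<in> A" unfolding po_def by blast
lemma po_refl: "po le A \<Longrightarrow> x \<in> A \<Longrightarrow> le x x" unfolding po_def by blast
lemma po_trans: "po le A \<Longrightarrow> le x y \<Longrightarrow> le y z \<Longrightarrow> le x z" unfolding po_def by blast
lemma po_antisym: "po le A \<Longrightarrow> le x y \<Longrightarrow> le y x \<Longrightarrow> x = y" unfolding po_def by blast

lemma iv_finite: "po le A \<Longrightarrow> finite (iv le A x y)"
  unfolding po_def iv_def by auto

lemma iv_mem: "po le A \<Longrightarrow> le x y \<Longrightarrow> y \<in> iv le A x y"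
  unfolding po_def iv_def by auto

lemma iv_card_less:
  assumes "po le A" "le x z" "le z y" "z \<noteq> y"
  shows "card (iv le A x z) < card (iv le A x y)"
proof -
  have "iv le A x z \<subset> iv le A x y"
  proof
    show "iv le A x z \<subseteq> iv le A x y" using assms unfolding po_def iv_def by blast
    have "y \<notin> iv le A x z" using assms unfolding po_def iv_def by blast
    moreover have "y \<in> iv le A x y" using assms unfolding po_def iv_def by blast
    ultimately show "iv le A x z \<noteq> iv le A x y" by blast
  qed
  then show ?thesis using iv_finite[OF assms(1)] by (simp add: psubset_card_mono)
qed

lemma sum_unique:
  fixes h1 h2 :: "'a \<Rightarrow> 'b::ab_group_add"
  assumes po: "po le A"
    and hs: "\<And>w. le x w \<Longrightarrow> (\<Sum>z\<in>iv le A x w. h1 z) = (\<Sum>z\<in>iv le A x w. h2 z)"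
  shows "le x w \<Longrightarrow> h1 w = h2 w"
proof (induction "card (iv le A x w)" arbitrary: w rule: less_induct)
  case less
  have fin: "finite (iv le A x w)" using iv_finite[OF po] .
  have wm: "w \<in> iv le A x w" using iv_mem[OF po less.prems] .
  have eq: "(\<Sum>z\<in>iv le A x w - {w}. h1 z) = (\<Sum>z\<in>iv le A x w - {w}. h2 z)"
  proof (rule sum.cong)
    fix z assume z: "z \<in> iv le A x w - {w}"
    then have "le x z" "le z w" "z \<noteq> w" unfolding iv_def by auto
    then show "h1 z = h2 z" using less.hyps iv_card_less[OF po] by blast
  qed simp
  have "(\<Sum>z\<in>iv le A x w. h1 z) = h1 w + (\<Sum>z\<in>iv le A x w - {w}. h1 z)"
    using fin wm by (simp add: sum.remove)
  moreover have "(\<Sum>z\<in>iv le A x w. h2 z) = h2 w + (\<Sum>z\<in>iv le A x w - {w}. h2 z)"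
    using fin wm by (simp add: sum.remove)
  ultimately show ?case using hs[OF less.prems] eq by simp
qed

fun mu_fuel :: "nat \<Rightarrow> ('a \<Rightarrow> 'a \<Rightarrow> bool) \<Rightarrow> 'a set \<Rightarrow> 'a \<Rightarrow> 'a \<Rightarrow> int" where
  "mu_fuel 0 le A x y = 0"
| "mu_fuel (Suc n) le A x y = (if le x y then (if x = y then 1
      else - (\<Sum>z\<in>iv le A x y - {y}. mu_fuel n le A x z)) else 0)"

lemma mu_fuel_stable:
  assumes po: "po le A"
  shows "card (iv le A x y) \<le> n1 \<Longrightarrow> card (iv le A x y) \<le> n2 \<Longrightarrow> mu_fuel n1 le A x y = mu_fuel n2 le A x y"
proof (induction "card (iv le A x y)" arbitrary: y n1 n2 rule: less_induct)
  case less
  show ?case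
  proof (cases "le x y")
    case False
    then show ?thesis by (cases n1; cases n2) auto
  next
    case True
    have "card (iv le A x y) > 0" using iv_mem[OF po True] iv_finite[OF po] by (metis card_gt_0_iff empty_iff)
    then obtain k1 k2 where n: "n1 = Suc k1" "n2 = Suc k2" using less.prems by (cases n1; cases n2) auto
    have "(\<Sum>z\<in>iv le A x y - {y}. mu_fuel k1 le A x z) = (\<Sum>z\<in>iv le A x y - {y}. mu_fuel k2 le A x z)"
    proof (rule sum.cong)
      fix z assume z: "z \<in> iv le A x y - {y}"
      then have "le x z" "le z y" "z \<noteq> y" unfolding iv_def by auto
      then have c: "card (iv le A x z) < card (iv le A x y)" using iv_card_less[OF po] by blast
      then show "mu_fuel k1 le A x z = mu_fuel k2 le A x z"
        using less.hyps[OF c] less.prems n by simp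
    qed simp
    then show ?thesis using n True by simp
  qed
qed

lemma iv_card_le: "po le A \<Longrightarrow> card (iv le A x y) \<le> card A"
  unfolding po_def iv_def by (auto intro: card_mono)

lemma moebius_exists:
  assumes po: "po le A"
  shows "\<exists>f::'a \<Rightarrow> 'a \<Rightarrow> int. (\<forall>x y. f x y \<noteq> 0 \<longrightarrow> x \<in> A \<and> y \<in> A \<and> le x y) \<and>
     (\<forall>x\<in>A. \<forall>y\<in>A. le x y \<longrightarrow>
        (\<Sum>z\<in>{z\<in>A. le x z \<and> le z y}. f x z) = (if x = y then 1 else 0))"
proof -
  let ?f = "\<lambda>x y. mu_fuel (card A) le A x y"
  have PA: "\<forall>x y. ?f x y \<noteq> 0 \<longrightarrow> x \<in> A \<and> y \<in> A \<and> le x y"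
  proof (intro allI impI)
    fix x y assume "?f x y \<noteq> 0"
    then have "le x y" by (cases "card A") (auto split: if_splits)
    then show "x \<in> A \<and> y \<in> A \<and> le x y" using po_dom[OF po] by blast
  qed
  have PB: "\<forall>x\<in>A. \<forall>y\<in>A. le x y \<longrightarrow>
        (\<Sum>z\<in>{z\<in>A. le x z \<and> le z y}. ?f x z) = (if x = y then 1 else 0)"
  proof (intro ballI impI)
  fix x y assume xA: "x \<in> A" and yA: "y \<in> A" and le: "le x y"
  obtain k where cA: "card A = Suc k" using xA po_fin[OF po]
    by (metis card_gt_0_iff empty_iff gr0_implies_Suc)
  have fin: "finite (iv le A x y)" using iv_finite[OF po] .
  have ym: "y \<in> iv le A x y" using iv_mem[OF po le] .
  have sm: "(\<Sum>z\<in>iv le A x y. ?f x z) = ?f x y + (\<Sum>z\<in>iv le A x y - {y}. ?f x z)"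
    using fin ym by (simp add: sum.remove)
  show "(\<Sum>z\<in>{z\<in>A. le x z \<and> le z y}. ?f x z) = (if x = y then 1 else 0)"
  proof (cases "x = y")
    case True
    have "iv le A x y = {y}" using True po_antisym[OF po] po_dom[OF po le] po_refl[OF po] unfolding iv_def by blast
    then show ?thesis using True le cA unfolding iv_def
      by simp
  next
    case False
    have eq: "(\<Sum>z\<in>iv le A x y - {y}. mu_fuel k le A x z) = (\<Sum>z\<in>iv le A x y - {y}. ?f x z)"
    proof (rule sum.cong)
      fix z assume z: "z \<in> iv le A x y - {y}"
      then have "le x z" "le z y" "z \<noteq> y" unfolding iv_def by auto
      then have c: "card (iv le A x z) < card (iv le A x y)" using iv_card_less[OF po] by blast
      have "card (iv le A x y) \<le> card A" using iv_card_le[OF po] .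
      then show "mu_fuel k le A x z = ?f x z"
        using mu_fuel_stable[OF po, of x z k "card A"] c cA by simp
    qed simp
    have "?f x y = - (\<Sum>z\<in>iv le A x y - {y}. mu_fuel k le A x z)"
      using False le cA by simp
    then show ?thesis using sm eq False unfolding iv_def by simp
  qed
qed
  show ?thesis by (rule exI[of _ ?f], rule conjI[OF PA PB])
qed

lemma moebius_prop:
  assumes po: "po le A"
  shows "(\<forall>x y. moebius le A x y \<noteq> 0 \<longrightarrow> x \<in> A \<and> y \<in> A \<and> le x y) \<and>
     (\<forall>x\<in>A. \<forall>y\<in>A. le x y \<longrightarrow>
        (\<Sum>z\<in>{z\<in>A. le x z \<and> le z y}. moebius le A x z) = (if x = y then 1 else 0))"
proof -
  have ex1: "\<exists>!f::'a \<Rightarrow> 'a \<Rightarrow> int. (\<forall>x y. f x y \<noteq> 0 \<longrightarrow> x \<in> A \<and> y \<in> A \<and> le x y) \<and>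
     (\<forall>x\<in>A. \<forall>y\<in>A. le x y \<longrightarrow>
        (\<Sum>z\<in>{z\<in>A. le x z \<and> le z y}. f x z) = (if x = y then 1 else 0))"
  proof (rule ex_ex1I[OF moebius_exists[OF po]])
    fix f g :: "'a \<Rightarrow> 'a \<Rightarrow> int"
    assume f: "(\<forall>x y. f x y \<noteq> 0 \<longrightarrow> x \<in> A \<and> y \<in> A \<and> le x y) \<and>
     (\<forall>x\<in>A. \<forall>y\<in>A. le x y \<longrightarrow>
        (\<Sum>z\<in>{z\<in>A. le x z \<and> le z y}. f x z) = (if x = y then 1 else 0))"
    and g: "(\<forall>x y. g x y \<noteq> 0 \<longrightarrow> x \<in> A \<and> y \<in> A \<and> le x y) \<and>
     (\<forall>x\<in>A. \<forall>y\<in>A. le x y \<longrightarrow>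
        (\<Sum>z\<in>{z\<in>A. le x z \<and> le z y}. g x z) = (if x = y then 1 else 0))"
    show "f = g"
    proof (intro ext)
      fix x y
      show "f x y = g x y"
      proof (cases "le x y")
        case False then show ?thesis using f g by metis
      next
        case True
        have "\<And>w. le x w \<Longrightarrow> (\<Sum>z\<in>iv le A x w. f x z) = (\<Sum>z\<in>iv le A x w. g x z)"
        proof -
          fix w assume "le x w"
          then have "x \<in> A" "w \<in> A" using po_dom[OF po] by auto
          then show "(\<Sum>z\<in>iv le A x w. f x z) = (\<Sum>z\<in>iv le A x w. g x z)"
            using f g \<open>le x w\<close> unfolding iv_def by simp
        qed
        then show ?thesis using sum_unique[OF po, of x "f x" "g x" y] True by blast
      qed
    qed
  qed
  let ?P = "\<lambda>f::'a \<Rightarrow> 'a \<Rightarrow> int. (\<forall>x y. f x y \<noteq> 0 \<longrightarrow> x \<in> A \<and> y \<in> A \<and> le x y) \<and>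
     (\<forall>x\<in>A. \<forall>y\<in>A. le x y \<longrightarrow>
        (\<Sum>z\<in>{z\<in>A. le x z \<and> le z y}. f x z) = (if x = y then 1 else 0))"
  have "?P (THE f. ?P f)" by (rule theI'[OF ex1])
  then show ?thesis unfolding moebius_def .
qed

lemma moebius_zero: "po le A \<Longrightarrow> \<not> le x y \<Longrightarrow> moebius le A x y = 0"
  using moebius_prop by blast

lemma moebius_sum: "po le A \<Longrightarrow> le x y \<Longrightarrow>
   (\<Sum>z\<in>iv le A x y. moebius le A x z) = (if x = y then 1 else 0)"
  using moebius_prop[of le A] po_dom[of le A x y] unfolding iv_def by blast



fun disj :: "'a set list \<Rightarrow> bool" where
  "disj [] = True"
| "disj (S # Ss) = (S \<inter> \<Union>(set Ss) = {} \<and> disj Ss)"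

lemma disj_append: "disj (A @ B) \<longleftrightarrow> disj A \<and> disj B \<and> \<Union>(set A) \<inter> \<Union>(set B) = {}"
  by (induction A) auto

lemma disj_map_Int: "disj Ss \<Longrightarrow> disj (map (\<lambda>T. A \<inter> T) Ss)"
  by (induction Ss) auto

lemma Union_map_Int: "\<Union>(set (map (\<lambda>T. A \<inter> T) Ss)) = A \<inter> \<Union>(set Ss)"
  by auto

lemma Union_filter: "\<Union>(set (filter (\<lambda>S. S \<noteq> {}) Ss)) = \<Union>(set Ss)"
  by auto

lemma disj_filter: "disj Ss \<Longrightarrow> disj (filter P Ss)"
  by (induction Ss) auto

lemma disj_imp_disjoint: "disj Ss \<Longrightarrow> \<forall>S\<in>set Ss. S \<noteq> {} \<Longrightarrow> distinct Ss \<and> disjoint (set Ss)"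
proof (induction Ss)
  case Nil then show ?case by simp
next
  case (Cons S Ss)
  have "S \<notin> set Ss" using Cons.prems by auto
  moreover have "\<forall>T\<in>set Ss. S \<inter> T = {}" using Cons.prems by auto
  ultimately show ?case using Cons by (auto simp: disjoint_def)
qed

lemma disjoint_imp_disj: "distinct Ss \<Longrightarrow> disjoint (set Ss) \<Longrightarrow> disj Ss"
proof (induction Ss)
  case Nil then show ?case by simp
next
  case (Cons S Ss)
  have "\<forall>T\<in>set Ss. S \<inter> T = {}" using Cons.prems unfolding disjoint_def by auto
  moreover have "disjoint (set Ss)" using Cons.prems unfolding disjoint_def by auto
  ultimately show ?case using Cons by auto
qed

definition meet :: "'a set list \<Rightarrow> 'a set list \<Rightarrow> 'a set list" where
  "meet P Q = concat (map (\<lambda>S. map (\<lambda>T. S \<inter> T) Q) P)"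

lemma meet_Nil[simp]: "meet [] Q = []" by (simp add: meet_def)
lemma meet_Cons[simp]: "meet (S # P) Q = map (\<lambda>T. S \<inter> T) Q @ meet P Q" by (simp add: meet_def)

lemma meet_disj: "disj P \<Longrightarrow> disj Q \<Longrightarrow> disj (meet P Q) \<and> \<Union>(set (meet P Q)) = \<Union>(set P) \<inter> \<Union>(set Q)"
proof (induction P)
  case Nil then show ?case by simp
next
  case (Cons S P)
  then show ?case by (auto simp: disj_append disj_map_Int)
qed

lemma meet_restrict: "\<forall>S'\<in>set P. S' \<subseteq> U \<Longrightarrow> meet P (map (\<lambda>T. U \<inter> T) Q) = meet P Q"
  by (induction P) auto

lemma meet_blocks: "B \<in> set (meet P Q) \<Longrightarrow> \<exists>S\<in>set P. B \<subseteq> S"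
  by (auto simp: meet_def)

lemma filter_all_empty: "\<forall>X\<in>set Xs. X = {} \<Longrightarrow> filter (\<lambda>X. X \<noteq> {}) Xs = []"
  by (induction Xs) auto

lemma one_block: "disj P \<Longrightarrow> B \<subseteq> S0 \<Longrightarrow> S0 \<in> set P \<Longrightarrow>
   filter (\<lambda>X. X \<noteq> {}) (map (\<lambda>S. B \<inter> S) P) = filter (\<lambda>X. X \<noteq> {}) [B]"
proof (induction P)
  case Nil then show ?case by simp
next
  case (Cons S P)
  show ?case
  proof (cases "S = S0")
    case True
    then have "\<forall>X\<in>set (map (\<lambda>S. B \<inter> S) P). X = {}" using Cons.prems by auto
    then have "filter (\<lambda>X. X \<noteq> {}) (map (\<lambda>S. B \<inter> S) P) = []" by (rule filter_all_empty)
    moreover have "B \<inter> S = B" using True Cons.prems by auto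
    ultimately show ?thesis by simp
  next
    case False
    then have "S0 \<in> set P" using Cons.prems by auto
    then have "B \<inter> S = {}" using Cons.prems by auto
    then show ?thesis using Cons \<open>S0 \<in> set P\<close> by simp
  qed
qed

lemma meet_refine: "disj P \<Longrightarrow> \<forall>B\<in>set Q. \<exists>S\<in>set P. B \<subseteq> S \<Longrightarrow>
   filter (\<lambda>X. X \<noteq> {}) (meet Q P) = filter (\<lambda>X. X \<noteq> {}) Q"
proof (induction Q)
  case Nil then show ?case by simp
next
  case (Cons B Q)
  obtain S0 where "S0 \<in> set P" "B \<subseteq> S0" using Cons.prems by auto
  then have "filter (\<lambda>X. X \<noteq> {}) (map (\<lambda>S. B \<inter> S) P) = filter (\<lambda>X. X \<noteq> {}) [B]"
    using one_block Cons.prems(1) by blast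
  then show ?case using Cons by simp
qed

locale shm =
  fixes H :: "'l set \<Rightarrow> 'e set"
    and rl :: "('l \<Rightarrow> 'l) \<Rightarrow> 'l set \<Rightarrow> 'e \<Rightarrow> 'e"
    and m :: "'l set \<Rightarrow> 'l set \<Rightarrow> 'e \<Rightarrow> 'e \<Rightarrow> 'e"
    and D :: "'l set \<Rightarrow> 'l set \<Rightarrow> 'e \<Rightarrow> 'e \<times> 'e"
  assumes hopf: "set_hopf_monoid H rl m D"
    and comm0: "commutative_shm H m"
begin

abbreviation e where "e \<equiv> unit_elem H"

lemmas hc = hopf[unfolded set_hopf_monoid_def]
lemmas hc1 = hc[THEN conjunct1]
lemmas hc2 = hc[THEN conjunct2, THEN conjunct1]
lemmas hc3 = hc[THEN conjunct2, THEN conjunct2, THEN conjunct1]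
lemmas hc6 = hc[THEN conjunct2, THEN conjunct2, THEN conjunct2, THEN conjunct2, THEN conjunct2, THEN conjunct1]
lemmas hc7 = hc[THEN conjunct2, THEN conjunct2, THEN conjunct2, THEN conjunct2, THEN conjunct2, THEN conjunct2, THEN conjunct1]
lemmas hc8 = hc[THEN conjunct2, THEN conjunct2, THEN conjunct2, THEN conjunct2, THEN conjunct2, THEN conjunct2, THEN conjunct2, THEN conjunct1]
lemmas hc9 = hc[THEN conjunct2, THEN conjunct2, THEN conjunct2, THEN conjunct2, THEN conjunct2, THEN conjunct2, THEN conjunct2, THEN conjunct2, THEN conjunct1]
lemmas hc10 = hc[THEN conjunct2, THEN conjunct2, THEN conjunct2, THEN conjunct2, THEN conjunct2, THEN conjunct2, THEN conjunct2, THEN conjunct2, THEN conjunct2]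

lemmas sc = hc1[unfolded set_species_def]

lemma finH: "finite I \<Longrightarrow> finite (H I)" using sc[THEN conjunct1] by blast

lemma H_empty: "H {} = {e}"
proof -
  obtain u where "H {} = {u}" using sc[THEN conjunct2, THEN conjunct1] by blast
  then show ?thesis unfolding unit_elem_def by simp
qed

lemma m_closed: "finite S \<Longrightarrow> finite T \<Longrightarrow> S \<inter> T = {} \<Longrightarrow> x \<in> H S \<Longrightarrow> y \<in> H T \<Longrightarrow> m S T x y \<in> H (S \<union> T)"
  using hc2 by blast

lemma D_closed: "finite S \<Longrightarrow> finite T \<Longrightarrow> S \<inter> T = {} \<Longrightarrow> x \<in> H (S \<union> T) \<Longrightarrow>
   fst (D S T x) \<in> H S \<and> snd (D S T x) \<in> H T"
  using hc3 by blast

lemma m_unit: "finite I \<Longrightarrow> x \<in> H I \<Longrightarrow> m {} I e x = x \<and> m I {} x e = x"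
  using hc6 by blast

lemma D_unit: "finite I \<Longrightarrow> x \<in> H I \<Longrightarrow> D {} I x = (e, x) \<and> D I {} x = (x, e)"
  using hc7 by blast

lemma assoc: "finite R \<Longrightarrow> finite S \<Longrightarrow> finite T \<Longrightarrow> R \<inter> S = {} \<Longrightarrow> R \<inter> T = {} \<Longrightarrow> S \<inter> T = {}
  \<Longrightarrow> x \<in> H R \<Longrightarrow> y \<in> H S \<Longrightarrow> z \<in> H T \<Longrightarrow>
        m (R \<union> S) T (m R S x y) z = m R (S \<union> T) x (m S T y z)"
  using hc8 by blast

lemma coassoc_raw: "finite R \<Longrightarrow> finite S \<Longrightarrow> finite T \<Longrightarrow> R \<inter> S = {} \<Longrightarrow> R \<inter> T = {} \<Longrightarrow> S \<inter> T = {}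
        \<Longrightarrow> x \<in> H (R \<union> S \<union> T) \<Longrightarrow>
        (let (a, w) = D (R \<union> S) T x; (u, v) = D R S a in (u, v, w)) =
        (let (u, b) = D R (S \<union> T) x; (v, w) = D S T b in (u, v, w))"
  using hc9 by blast

lemma coassoc: assumes "finite R" "finite S" "finite T" "R \<inter> S = {}" "R \<inter> T = {}" "S \<inter> T = {}"
   "x \<in> H (R \<union> S \<union> T)"
  shows "fst (D R S (fst (D (R \<union> S) T x))) = fst (D R (S \<union> T) x)"
    "snd (D R S (fst (D (R \<union> S) T x))) = fst (D S T (snd (D R (S \<union> T) x)))"
    "snd (D (R \<union> S) T x) = snd (D S T (snd (D R (S \<union> T) x)))"
  using coassoc_raw[OF assms] by (simp_all add: Let_def case_prod_beta prod_eq_iff)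

lemma compat: "finite S1 \<Longrightarrow> finite S2 \<Longrightarrow> finite T1 \<Longrightarrow> finite T2 \<Longrightarrow>
        S1 \<inter> S2 = {} \<Longrightarrow> T1 \<inter> T2 = {} \<Longrightarrow> S1 \<union> S2 = T1 \<union> T2 \<Longrightarrow> x \<in> H S1 \<Longrightarrow> y \<in> H S2 \<Longrightarrow>
          D T1 T2 (m S1 S2 x y) =
            (m (S1 \<inter> T1) (S2 \<inter> T1) (fst (D (S1 \<inter> T1) (S1 \<inter> T2) x)) (fst (D (S2 \<inter> T1) (S2 \<inter> T2) y)),
             m (S1 \<inter> T2) (S2 \<inter> T2) (snd (D (S1 \<inter> T1) (S1 \<inter> T2) x)) (snd (D (S2 \<inter> T1) (S2 \<inter> T2) y)))"
proof -
  assume a: "finite S1" "finite S2" "finite T1" "finite T2"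
        "S1 \<inter> S2 = {}" "T1 \<inter> T2 = {}" "S1 \<union> S2 = T1 \<union> T2" "x \<in> H S1" "y \<in> H S2"
  have "\<forall>S1 S2 T1 T2 x y. finite S1 \<and> finite S2 \<and> finite T1 \<and> finite T2 \<and>
        S1 \<inter> S2 = {} \<and> T1 \<inter> T2 = {} \<and> S1 \<union> S2 = T1 \<union> T2 \<and> x \<in> H S1 \<and> y \<in> H S2 \<longrightarrow>
        (let A = S1 \<inter> T1; B = S1 \<inter> T2; C = S2 \<inter> T1; E = S2 \<inter> T2 in
          D T1 T2 (m S1 S2 x y) =
            (m A C (fst (D A B x)) (fst (D C E y)), m B E (snd (D A B x)) (snd (D C E y))))"
    by (rule hc10)
  then show ?thesis using a unfolding Let_def by blast
qed

lemma comm: "finite S \<Longrightarrow> finite T \<Longrightarrow> S \<inter> T = {} \<Longrightarrow> x \<in> H S \<Longrightarrow> y \<in> H T \<Longrightarrow> m S T x y = m T S y x"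
  using comm0 unfolding commutative_shm_def by blast

end



context shm begin

definition R :: "'l set list \<Rightarrow> 'e \<Rightarrow> 'e" where
  "R Ss x = mult_it m e Ss (comult_it D Ss x)"

lemma R_Nil[simp]: "R [] x = e" by (simp add: R_def)

lemma R_Cons: "R (S # Ss) x = m S (\<Union>(set Ss)) (fst (D S (\<Union>(set Ss)) x)) (R Ss (snd (D S (\<Union>(set Ss)) x)))"
  by (simp add: R_def)

lemma R_closed: "disj Ss \<Longrightarrow> finite (\<Union>(set Ss)) \<Longrightarrow> x \<in> H (\<Union>(set Ss)) \<Longrightarrow> R Ss x \<in> H (\<Union>(set Ss))"
proof (induction Ss arbitrary: x)
  case Nil then show ?case using H_empty by simp
next
  case (Cons S Ss)
  let ?U = "\<Union>(set Ss)"
  have f: "finite S" "finite ?U" "S \<inter> ?U = {}" using Cons.prems by auto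
  have x: "x \<in> H (S \<union> ?U)" using Cons.prems by simp
  have d: "fst (D S ?U x) \<in> H S" "snd (D S ?U x) \<in> H ?U" using D_closed[OF f x] by auto
  have "R Ss (snd (D S ?U x)) \<in> H ?U" using Cons.IH[OF _ f(2) d(2)] Cons.prems by simp
  then show ?case using m_closed[OF f d(1)] by (simp add: R_Cons)
qed

lemma R_filter: "disj Ss \<Longrightarrow> finite (\<Union>(set Ss)) \<Longrightarrow> x \<in> H (\<Union>(set Ss)) \<Longrightarrow>
   R (filter (\<lambda>S. S \<noteq> {}) Ss) x = R Ss x"
proof (induction Ss arbitrary: x)
  case Nil then show ?case by simp
next
  case (Cons S Ss)
  let ?U = "\<Union>(set Ss)"
  have f: "finite S" "finite ?U" "S \<inter> ?U = {}" using Cons.prems by auto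
  have x: "x \<in> H (S \<union> ?U)" using Cons.prems by simp
  have d: "fst (D S ?U x) \<in> H S" "snd (D S ?U x) \<in> H ?U" using D_closed[OF f x] by auto
  have ih: "R (filter (\<lambda>S. S \<noteq> {}) Ss) (snd (D S ?U x)) = R Ss (snd (D S ?U x))"
    using Cons.IH[OF _ f(2) d(2)] Cons.prems by simp
  show ?case
  proof (cases "S = {}")
    case True
    have xU: "x \<in> H ?U" using x True by simp
    have "R (S # Ss) x = m {} ?U e (R Ss x)"
      using True D_unit[OF f(2) xU] by (simp add: R_Cons)
    also have "\<dots> = R Ss x"
      using m_unit[OF f(2)] R_closed[OF _ f(2) xU] Cons.prems by simp
    also have "\<dots> = R (filter (\<lambda>S. S \<noteq> {}) Ss) x"
      using Cons.IH[OF _ f(2) xU] Cons.prems by simp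
    finally show ?thesis using True by simp
  next
    case False
    have u: "\<Union>(set (filter (\<lambda>S. S \<noteq> {}) Ss)) = ?U" by (rule Union_filter)
    have "filter (\<lambda>S. S \<noteq> {}) (S # Ss) = S # filter (\<lambda>S. S \<noteq> {}) Ss" using False by simp
    then show ?thesis using ih by (simp only: R_Cons u)
  qed
qed

lemma R_single: "finite I \<Longrightarrow> x \<in> H I \<Longrightarrow> R [I] x = x"
  using D_unit m_unit by (simp add: R_Cons)

lemma R_append:
  assumes "disj (Ss1 @ Ss2)" "\<Union>(set Ss1) = A" "\<Union>(set Ss2) = B" "finite A" "finite B" "x \<in> H (A \<union> B)"
  shows "R (Ss1 @ Ss2) x = m A B (R Ss1 (fst (D A B x))) (R Ss2 (snd (D A B x)))"
  using assms
proof (induction Ss1 arbitrary: A x)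
  case Nil
  then have A: "A = {}" by simp
  have xB: "x \<in> H B" using Nil A by simp
  show ?case using A D_unit[OF Nil(5) xB] m_unit[OF Nil(5)] R_closed[of Ss2 x] xB Nil by simp
next
  case (Cons S Ss1)
  let ?A' = "\<Union>(set Ss1)"
  have A: "A = S \<union> ?A'" using Cons.prems by simp
  have dj: "disj (Ss1 @ Ss2)" "S \<inter> ?A' = {}" "S \<inter> B = {}" "?A' \<inter> B = {}"
    using Cons.prems by (auto simp: disj_append)
  have fin: "finite S" "finite ?A'" using Cons.prems by auto
  have x: "x \<in> H (S \<union> ?A' \<union> B)" using Cons.prems A by simp
  have x2: "x \<in> H (S \<union> (?A' \<union> B))" using x by (simp add: Un_assoc)
  have U: "\<Union>(set (Ss1 @ Ss2)) = ?A' \<union> B" using Cons.prems by simp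
  let ?xS = "fst (D S (?A' \<union> B) x)"
  let ?x' = "snd (D S (?A' \<union> B) x)"
  have d1: "?xS \<in> H S" "?x' \<in> H (?A' \<union> B)" using D_closed[OF fin(1) _ _ x2] dj Cons.prems fin by auto
  have d2: "fst (D ?A' B ?x') \<in> H ?A'" "snd (D ?A' B ?x') \<in> H B" using D_closed[OF fin(2) _ _ d1(2)] dj Cons.prems by auto
  have ih: "R (Ss1 @ Ss2) ?x' = m ?A' B (R Ss1 (fst (D ?A' B ?x'))) (R Ss2 (snd (D ?A' B ?x')))"
    using Cons.IH[OF dj(1) refl Cons.prems(3) fin(2) Cons.prems(5) d1(2)] .
  have co: "fst (D S ?A' (fst (D (S \<union> ?A') B x))) = ?xS"
    "snd (D S ?A' (fst (D (S \<union> ?A') B x))) = fst (D ?A' B ?x')"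
    "snd (D (S \<union> ?A') B x) = snd (D ?A' B ?x')"
    using coassoc[OF fin Cons.prems(5) dj(2) dj(3) dj(4) x] by auto
  have r1: "R Ss1 (fst (D ?A' B ?x')) \<in> H ?A'" using R_closed[of Ss1] dj(1) fin(2) d2 by (simp add: disj_append)
  have r2: "R Ss2 (snd (D ?A' B ?x')) \<in> H B" using R_closed[of Ss2] dj(1) Cons.prems d2 by (simp add: disj_append)
  have "R ((S # Ss1) @ Ss2) x = m S (?A' \<union> B) ?xS (R (Ss1 @ Ss2) ?x')"
    using U by (simp add: R_Cons)
  also have "\<dots> = m S (?A' \<union> B) ?xS (m ?A' B (R Ss1 (fst (D ?A' B ?x'))) (R Ss2 (snd (D ?A' B ?x'))))"
    using ih by simp
  also have "\<dots> = m (S \<union> ?A') B (m S ?A' ?xS (R Ss1 (fst (D ?A' B ?x')))) (R Ss2 (snd (D ?A' B ?x')))"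
    using assoc[OF fin Cons.prems(5) dj(2) dj(3) dj(4) d1(1) r1 r2] by simp
  also have "\<dots> = m A B (R (S # Ss1) (fst (D A B x))) (R Ss2 (snd (D A B x)))"
    using A co by (simp add: R_Cons)
  finally show ?case .
qed

end



context shm begin

lemma interchange:
  assumes fin: "finite P" "finite Q" "finite R'" "finite W"
    and dj: "P \<inter> Q = {}" "P \<inter> R' = {}" "P \<inter> W = {}" "Q \<inter> R' = {}" "Q \<inter> W = {}" "R' \<inter> W = {}"
    and mem: "a \<in> H P" "b \<in> H Q" "c \<in> H R'" "d \<in> H W"
  shows "m (P \<union> Q) (R' \<union> W) (m P Q a b) (m R' W c d) = m (P \<union> R') (Q \<union> W) (m P R' a c) (m Q W b d)"
proof -
  have cd: "m R' W c d \<in> H (R' \<union> W)" using m_closed fin dj mem by blast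
  have bd: "m Q W b d \<in> H (Q \<union> W)" using m_closed fin dj mem by blast
  have bc: "m Q R' b c \<in> H (Q \<union> R')" using m_closed fin dj mem by blast
  have cb: "m R' Q c b \<in> H (R' \<union> Q)" using m_closed fin dj mem by (metis Int_commute)
  have s1: "m (P \<union> Q) (R' \<union> W) (m P Q a b) (m R' W c d) = m P (Q \<union> (R' \<union> W)) a (m Q (R' \<union> W) b (m R' W c d))"
    using assoc[of P Q "R' \<union> W" a b "m R' W c d"] fin dj mem cd by (simp add: Int_Un_distrib)
  have s2: "m Q (R' \<union> W) b (m R' W c d) = m (Q \<union> R') W (m Q R' b c) d"
    using assoc[of Q R' W b c d] fin dj mem by auto
  have s3: "m Q R' b c = m R' Q c b" using comm fin dj mem by blast
  have s4: "m (R' \<union> Q) W (m R' Q c b) d = m R' (Q \<union> W) c (m Q W b d)"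
    using assoc[of R' Q W c b d] fin dj mem by (auto simp: Int_commute)
  have s5: "m (P \<union> R') (Q \<union> W) (m P R' a c) (m Q W b d) = m P (R' \<union> (Q \<union> W)) a (m R' (Q \<union> W) c (m Q W b d))"
    using assoc[of P R' "Q \<union> W" a c "m Q W b d"] fin dj mem bd by (simp add: Int_Un_distrib Int_commute)
  have e1: "Q \<union> R' = R' \<union> Q" "Q \<union> (R' \<union> W) = R' \<union> (Q \<union> W)" by auto
  show ?thesis using s1 s2 s3 s4 s5 e1 by simp
qed

lemma R_split:
  assumes "disj Ss" "\<Union>(set Ss) = A \<union> B" "finite A" "finite B" "A \<inter> B = {}" "x \<in> H A" "y \<in> H B"
  shows "R Ss (m A B x y) = m A B (R (map (\<lambda>T. A \<inter> T) Ss) x) (R (map (\<lambda>T. B \<inter> T) Ss) y)"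
  using assms
proof (induction Ss arbitrary: A B x y)
  case Nil
  then have AB: "A = {}" "B = {}" by auto
  then have "x = e" "y = e" using Nil H_empty by auto
  then show ?case using AB m_unit[of "{}" e] H_empty by simp
next
  case (Cons S Ss)
  let ?U = "\<Union>(set Ss)"
  have sub: "S \<union> ?U = A \<union> B" using Cons.prems(2) by simp
  have fS: "finite S" "finite ?U" using sub Cons.prems(3,4) by (metis finite_Un)+
  have fU: "finite ?U" using fS(2) .
  have SU: "S \<inter> ?U = {}" "S \<union> ?U = A \<union> B" using Cons.prems by auto
  have cp: "D S ?U (m A B x y) =
            (m (A \<inter> S) (B \<inter> S) (fst (D (A \<inter> S) (A \<inter> ?U) x)) (fst (D (B \<inter> S) (B \<inter> ?U) y)),
             m (A \<inter> ?U) (B \<inter> ?U) (snd (D (A \<inter> S) (A \<inter> ?U) x)) (snd (D (B \<inter> S) (B \<inter> ?U) y)))"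
    using compat[of A B S ?U x y] Cons.prems fS fU SU by auto
  let ?xs = "fst (D (A \<inter> S) (A \<inter> ?U) x)"
  let ?xu = "snd (D (A \<inter> S) (A \<inter> ?U) x)"
  let ?ys = "fst (D (B \<inter> S) (B \<inter> ?U) y)"
  let ?yu = "snd (D (B \<inter> S) (B \<inter> ?U) y)"
  have Aeq: "(A \<inter> S) \<union> (A \<inter> ?U) = A" using SU by blast
  have Beq: "(B \<inter> S) \<union> (B \<inter> ?U) = B" using SU by blast
  have fin4: "finite (A \<inter> S)" "finite (A \<inter> ?U)" "finite (B \<inter> S)" "finite (B \<inter> ?U)" using Cons.prems by auto
  have dx: "?xs \<in> H (A \<inter> S)" "?xu \<in> H (A \<inter> ?U)"
    using D_closed[of "A \<inter> S" "A \<inter> ?U" x] fin4 SU Aeq Cons.prems by auto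
  have dy: "?ys \<in> H (B \<inter> S)" "?yu \<in> H (B \<inter> ?U)"
    using D_closed[of "B \<inter> S" "B \<inter> ?U" y] fin4 SU Beq Cons.prems by auto
  have ih: "R Ss (m (A \<inter> ?U) (B \<inter> ?U) ?xu ?yu) =
      m (A \<inter> ?U) (B \<inter> ?U) (R (map (\<lambda>T. (A \<inter> ?U) \<inter> T) Ss) ?xu) (R (map (\<lambda>T. (B \<inter> ?U) \<inter> T) Ss) ?yu)"
    using Cons.IH[of "A \<inter> ?U" "B \<inter> ?U" ?xu ?yu] Cons.prems fin4 dx dy SU by auto
  have mA: "map (\<lambda>T. (A \<inter> ?U) \<inter> T) Ss = map (\<lambda>T. A \<inter> T) Ss" by auto
  have mB: "map (\<lambda>T. (B \<inter> ?U) \<inter> T) Ss = map (\<lambda>T. B \<inter> T) Ss" by auto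
  let ?RA = "R (map (\<lambda>T. A \<inter> T) Ss) ?xu"
  let ?RB = "R (map (\<lambda>T. B \<inter> T) Ss) ?yu"
  have RA: "?RA \<in> H (A \<inter> ?U)"
    using R_closed[of "map (\<lambda>T. A \<inter> T) Ss" ?xu] disj_map_Int Cons.prems fin4 dx by (auto simp: Union_map_Int)
  have RB: "?RB \<in> H (B \<inter> ?U)"
    using R_closed[of "map (\<lambda>T. B \<inter> T) Ss" ?yu] disj_map_Int Cons.prems fin4 dy by (auto simp: Union_map_Int)
  have "R (S # Ss) (m A B x y) = m S ?U (m (A \<inter> S) (B \<inter> S) ?xs ?ys) (m (A \<inter> ?U) (B \<inter> ?U) ?RA ?RB)"
    using cp ih mA mB by (simp add: R_Cons)
  also have "\<dots> = m ((A \<inter> S) \<union> (A \<inter> ?U)) ((B \<inter> S) \<union> (B \<inter> ?U)) (m (A \<inter> S) (A \<inter> ?U) ?xs ?RA) (m (B \<inter> S) (B \<inter> ?U) ?ys ?RB)"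
  proof -
    have "m ((A \<inter> S) \<union> (A \<inter> ?U)) ((B \<inter> S) \<union> (B \<inter> ?U)) (m (A \<inter> S) (A \<inter> ?U) ?xs ?RA) (m (B \<inter> S) (B \<inter> ?U) ?ys ?RB)
      = m ((A \<inter> S) \<union> (B \<inter> S)) ((A \<inter> ?U) \<union> (B \<inter> ?U)) (m (A \<inter> S) (B \<inter> S) ?xs ?ys) (m (A \<inter> ?U) (B \<inter> ?U) ?RA ?RB)"
      apply (rule interchange)
      using fin4 dx dy RA RB SU Cons.prems by auto
    moreover have "(A \<inter> S) \<union> (B \<inter> S) = S" "(A \<inter> ?U) \<union> (B \<inter> ?U) = ?U" using SU by auto
    ultimately show ?thesis by simp
  qed
  also have "\<dots> = m A B (R ((A \<inter> S) # map (\<lambda>T. A \<inter> T) Ss) x) (R ((B \<inter> S) # map (\<lambda>T. B \<inter> T) Ss) y)"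
    using Aeq Beq by (simp add: R_Cons Union_map_Int)
  finally show ?case by simp
qed

lemma R_meet:
  assumes "disj P" "disj Q" "\<Union>(set P) = I" "\<Union>(set Q) = I" "finite I" "x \<in> H I"
  shows "R Q (R P x) = R (meet P Q) x"
  using assms
proof (induction P arbitrary: Q I x)
  case Nil
  then have "I = {}" by simp
  then have "\<forall>T\<in>set Q. T = {}" using Nil by auto
  then have "R Q e = R (filter (\<lambda>S. S \<noteq> {}) Q) e" using R_filter[of Q e] Nil H_empty \<open>I = {}\<close> by simp
  also have "\<dots> = e" using \<open>\<forall>T\<in>set Q. T = {}\<close> filter_all_empty by (metis R_Nil)
  finally show ?case by simp
next
  case (Cons S P)
  let ?U = "\<Union>(set P)"
  have I: "I = S \<union> ?U" "S \<inter> ?U = {}" "finite S" "finite ?U" using Cons.prems by auto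
  let ?xS = "fst (D S ?U x)"
  let ?xU = "snd (D S ?U x)"
  have dx: "?xS \<in> H S" "?xU \<in> H ?U" using D_closed[of S ?U x] I Cons.prems by auto
  have RU: "R P ?xU \<in> H ?U" using R_closed[of P ?xU] Cons.prems dx I by auto
  have "R Q (R (S # P) x) = R Q (m S ?U ?xS (R P ?xU))" by (simp add: R_Cons)
  also have "\<dots> = m S ?U (R (map (\<lambda>T. S \<inter> T) Q) ?xS) (R (map (\<lambda>T. ?U \<inter> T) Q) (R P ?xU))"
    using R_split[of Q S ?U ?xS "R P ?xU"] Cons.prems I dx RU by auto
  also have "R (map (\<lambda>T. ?U \<inter> T) Q) (R P ?xU) = R (meet P (map (\<lambda>T. ?U \<inter> T) Q)) ?xU"
    using Cons.IH[of "map (\<lambda>T. ?U \<inter> T) Q" ?U ?xU] Cons.prems I dx disj_map_Int[of Q ?U]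
    by (auto simp: Union_map_Int)
  also have "meet P (map (\<lambda>T. ?U \<inter> T) Q) = meet P Q" by (rule meet_restrict) auto
  also have "m S ?U (R (map (\<lambda>T. S \<inter> T) Q) ?xS) (R (meet P Q) ?xU) = R (map (\<lambda>T. S \<inter> T) Q @ meet P Q) x"
  proof -
    have md: "disj (meet P Q)" "\<Union>(set (meet P Q)) = ?U" using meet_disj[of P Q] Cons.prems I by auto
    have "disj (map (\<lambda>T. S \<inter> T) Q @ meet P Q)" using md disj_map_Int[of Q S] Cons.prems I
      by (auto simp: disj_append Union_map_Int)
    moreover have "\<Union>(set (map (\<lambda>T. S \<inter> T) Q)) = S" using Cons.prems I by (auto simp: Union_map_Int)
    ultimately show ?thesis using R_append[of "map (\<lambda>T. S \<inter> T) Q" "meet P Q" S ?U x] md I Cons.prems by auto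
  qed
  finally show ?case by simp
qed

end



context shm begin

abbreviation rle where "rle I \<equiv> reassembly_le H m D I"

lemma rle_iff: "finite I \<Longrightarrow> rle I x y \<longleftrightarrow> x \<in> H I \<and> (\<exists>Ss. disj Ss \<and> \<Union>(set Ss) = I \<and> y = R Ss x)"
proof
  assume "rle I x y"
  then have "x \<in> H I \<and> (\<exists>Ss. distinct Ss \<and> partition_on I (set Ss) \<and> y = R Ss x)"
    unfolding reassembly_le_def R_def by simp
  then obtain Ss where Ss: "x \<in> H I" "distinct Ss" "partition_on I (set Ss)" "y = R Ss x"
    by blast
  have "disj Ss" using disjoint_imp_disj[OF Ss(2)] Ss(3) unfolding partition_on_def by simp
  moreover have "\<Union>(set Ss) = I" using Ss(3) unfolding partition_on_def by simp
  ultimately show "x \<in> H I \<and> (\<exists>Ss. disj Ss \<and> \<Union>(set Ss) = I \<and> y = R Ss x)"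
    using Ss by blast
next
  assume fin: "finite I" and h: "x \<in> H I \<and> (\<exists>Ss. disj Ss \<and> \<Union>(set Ss) = I \<and> y = R Ss x)"
  then obtain Ss where Ss: "x \<in> H I" "disj Ss" "\<Union>(set Ss) = I" "y = R Ss x" by blast
  let ?F = "filter (\<lambda>S. S \<noteq> {}) Ss"
  have "disj ?F" using disj_filter Ss(2) by blast
  then have "distinct ?F \<and> disjoint (set ?F)" by (rule disj_imp_disjoint) simp
  moreover have "\<Union>(set ?F) = I" using Ss(3) Union_filter[of Ss] by metis
  moreover have "{} \<notin> set ?F" by simp
  ultimately have F: "distinct ?F" "partition_on I (set ?F)" unfolding partition_on_def by simp_all
  have "y = R ?F x" using R_filter[of Ss x] Ss fin by simp
  then have "y = mult_it m (unit_elem H) ?F (comult_it D ?F x)" unfolding R_def .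
  then show "rle I x y" unfolding reassembly_le_def using Ss(1) F by blast
qed

lemma rle_D:
  assumes "finite I" "rle I x y"
  obtains Ss where "x \<in> H I" "disj Ss" "\<Union>(set Ss) = I" "y = R Ss x"
proof -
  have "x \<in> H I \<and> (\<exists>Ss. disj Ss \<and> \<Union>(set Ss) = I \<and> y = R Ss x)"
    using rle_iff[OF assms(1)] assms(2) by simp
  then show thesis using that by blast
qed

lemma rle_I: "finite I \<Longrightarrow> x \<in> H I \<Longrightarrow> disj Ss \<Longrightarrow> \<Union>(set Ss) = I \<Longrightarrow> rle I x (R Ss x)"
  using rle_iff[of I x "R Ss x"] by blast

lemma rle_po: assumes fin: "finite I" shows "po (rle I) (H I)"
  unfolding po_def
proof (intro conjI allI impI ballI)
  show "finite (H I)" using finH fin by blast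
next
  fix x y assume xy: "rle I x y"
  obtain Ss where "x \<in> H I" "disj Ss" "\<Union>(set Ss) = I" "y = R Ss x" using rle_D[OF fin xy] by blast
  then show "x \<in> H I" "y \<in> H I" using R_closed fin by auto
next
  fix x assume x: "x \<in> H I"
  have "disj [I]" "\<Union>(set [I]) = I" by auto
  then have "rle I x (R [I] x)" using rle_I[OF fin x] by blast
  then show "rle I x x" using R_single[OF fin x] by simp
next
  fix x y z assume xy: "rle I x y" and yz: "rle I y z"
  obtain P where P: "x \<in> H I" "disj P" "\<Union>(set P) = I" "y = R P x" using rle_D[OF fin xy] by blast
  obtain Q where Q: "disj Q" "\<Union>(set Q) = I" "z = R Q y" using rle_D[OF fin yz] by blast
  have "z = R (meet P Q) x" using R_meet P Q fin by simp
  moreover have "disj (meet P Q)" "\<Union>(set (meet P Q)) = I" using meet_disj[of P Q] P Q by auto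
  ultimately show "rle I x z" using rle_I[OF fin P(1)] by simp
next
  fix x y assume xy: "rle I x y" and yx: "rle I y x"
  obtain P where P: "x \<in> H I" "disj P" "\<Union>(set P) = I" "y = R P x" using rle_D[OF fin xy] by blast
  obtain Q where Q: "disj Q" "\<Union>(set Q) = I" "x = R Q y" using rle_D[OF fin yx] by blast
  let ?r = "meet P Q"
  have r: "disj ?r" "\<Union>(set ?r) = I" using meet_disj[of P Q] P(1-3) Q(1,2) by auto
  have x1: "x = R Q (R P x)" using Q(3) unfolding P(4) .
  have "R Q (R P x) = R ?r x" by (rule R_meet) (use P(1-3) Q(1,2) fin in auto)
  with x1 have xr: "x = R ?r x" by (rule trans)
  have "y = R P (R ?r x)" by (rule trans[OF P(4) arg_cong[OF xr, of "R P"]])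
  also have "\<dots> = R (meet ?r P) x" using R_meet[of ?r P I x] r P fin by simp
  also have "\<dots> = R (filter (\<lambda>S. S \<noteq> {}) (meet ?r P)) x"
    using R_filter[of "meet ?r P" x] meet_disj[of ?r P] r P fin by simp
  also have "filter (\<lambda>S. S \<noteq> {}) (meet ?r P) = filter (\<lambda>S. S \<noteq> {}) ?r"
  proof (rule meet_refine)
    show "disj P" using P by simp
    show "\<forall>B\<in>set ?r. \<exists>S\<in>set P. B \<subseteq> S" using meet_blocks[of _ P Q] by blast
  qed
  also have "R (filter (\<lambda>S. S \<noteq> {}) ?r) x = R ?r x" using R_filter[of ?r x] r P fin by simp
  finally have "y = R ?r x" .
  then show "x = y" by (rule trans[OF xr sym])
qed

lemma D_m: "finite S \<Longrightarrow> finite T \<Longrightarrow> S \<inter> T = {} \<Longrightarrow> a \<in> H S \<Longrightarrow> b \<in> H T \<Longrightarrow> D S T (m S T a b) = (a, b)"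
proof -
  assume a: "finite S" "finite T" "S \<inter> T = {}" "a \<in> H S" "b \<in> H T"
  have i: "S \<inter> S = S" "T \<inter> S = {}" "T \<inter> T = T" using a by auto
  have "D S T (m S T a b) = (m S {} (fst (D S {} a)) (fst (D {} T b)), m {} T (snd (D S {} a)) (snd (D {} T b)))"
    using compat[of S T S T a b] a i by simp
  then show ?thesis using D_unit a m_unit by simp
qed

lemma m_inj: "finite S \<Longrightarrow> finite T \<Longrightarrow> S \<inter> T = {} \<Longrightarrow> a \<in> H S \<Longrightarrow> b \<in> H T \<Longrightarrow> a' \<in> H S \<Longrightarrow> b' \<in> H T \<Longrightarrow>
   m S T a b = m S T a' b' \<Longrightarrow> a = a' \<and> b = b'"
  using D_m by (metis prod.inject)

lemma rle_split:
  assumes "finite S" "finite T" "S \<inter> T = {}" "x \<in> H S" "y \<in> H T" "rle (S \<union> T) (m S T x y) w"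
  shows "\<exists>a b. rle S x a \<and> rle T y b \<and> w = m S T a b"
proof -
  have fin: "finite (S \<union> T)" using assms by simp
  obtain Ss where Ss: "disj Ss" "\<Union>(set Ss) = S \<union> T" "w = R Ss (m S T x y)"
    using rle_D[OF fin assms(6)] by blast
  have w: "w = m S T (R (map (\<lambda>U. S \<inter> U) Ss) x) (R (map (\<lambda>U. T \<inter> U) Ss) y)"
    using R_split[of Ss S T x y] Ss assms(1-5) by simp
  have "rle S x (R (map (\<lambda>U. S \<inter> U) Ss) x)"
    by (rule rle_I) (use assms(1-5) disj_map_Int[OF Ss(1)] Ss(2) in \<open>auto simp: Union_map_Int\<close>)
  moreover have "rle T y (R (map (\<lambda>U. T \<inter> U) Ss) y)"
    by (rule rle_I) (use assms(1-5) disj_map_Int[OF Ss(1)] Ss(2) in \<open>auto simp: Union_map_Int\<close>)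
  ultimately show ?thesis using w by blast
qed

lemma rle_mult:
  assumes "finite S" "finite T" "S \<inter> T = {}" "rle S x a" "rle T y b"
  shows "rle (S \<union> T) (m S T x y) (m S T a b)"
proof -
  obtain P where P: "x \<in> H S" "disj P" "\<Union>(set P) = S" "a = R P x" using rle_D[OF assms(1,4)] by blast
  obtain Q where Q: "y \<in> H T" "disj Q" "\<Union>(set Q) = T" "b = R Q y" using rle_D[OF assms(2,5)] by blast
  have xy: "m S T x y \<in> H (S \<union> T)" using m_closed assms(1-3) P(1) Q(1) by blast
  have dj: "disj (P @ Q)" using P Q assms by (simp add: disj_append)
  have un: "\<Union>(set (P @ Q)) = S \<union> T" using P Q by simp
  have "R (P @ Q) (m S T x y) = m S T (R P (fst (D S T (m S T x y)))) (R Q (snd (D S T (m S T x y))))"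
    by (rule R_append) (use dj P(3) Q(3) assms(1,2) xy in auto)
  also have "\<dots> = m S T a b" using D_m[OF assms(1-3) P(1) Q(1)] P(4) Q(4) by simp
  finally have "R (P @ Q) (m S T x y) = m S T a b" .
  moreover have "rle (S \<union> T) (m S T x y) (R (P @ Q) (m S T x y))"
    by (rule rle_I) (use assms(1,2) xy dj un in auto)
  ultimately show ?thesis by simp
qed

lemma rle_prod_iff:
  assumes "finite S" "finite T" "S \<inter> T = {}" "a \<in> H S" "b \<in> H T" "a' \<in> H S" "b' \<in> H T"
  shows "rle (S \<union> T) (m S T a b) (m S T a' b') \<longleftrightarrow> rle S a a' \<and> rle T b b'"
proof
  assume "rle (S \<union> T) (m S T a b) (m S T a' b')"
  then obtain a'' b'' where h: "rle S a a''" "rle T b b''" "m S T a' b' = m S T a'' b''"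
    using rle_split[OF assms(1-5)] by blast
  have "a'' \<in> H S" using po_dom[OF rle_po[OF assms(1)] h(1)] by blast
  moreover have "b'' \<in> H T" using po_dom[OF rle_po[OF assms(2)] h(2)] by blast
  ultimately have "a' = a''" "b' = b''" using m_inj[OF assms(1-3) assms(6,7) _ _ h(3)] by blast+
  then show "rle S a a' \<and> rle T b b'" using h by simp
next
  assume "rle S a a' \<and> rle T b b'"
  then show "rle (S \<union> T) (m S T a b) (m S T a' b')" using rle_mult assms by blast
qed

end



context shm begin

lemma mob_prod:
  assumes fS: "finite S" and fT: "finite T" and dST: "S \<inter> T = {}" and x: "x \<in> H S" and y: "y \<in> H T"
    and xa: "rle S x a" and yb: "rle T y b"
  shows "moebius (rle (S \<union> T)) (H (S \<union> T)) (m S T x y) (m S T a b)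
       = moebius (rle S) (H S) x a * moebius (rle T) (H T) y b"
proof -
  let ?I = "S \<union> T"
  let ?xy = "m S T x y"
  have fI: "finite ?I" using fS fT by simp
  have poI: "po (rle ?I) (H ?I)" using rle_po[OF fI] .
  have poS: "po (rle S) (H S)" using rle_po[OF fS] .
  have poT: "po (rle T) (H T)" using rle_po[OF fT] .
  let ?muI = "moebius (rle ?I) (H ?I)"
  let ?muS = "moebius (rle S) (H S)"
  let ?muT = "moebius (rle T) (H T)"
  let ?h2 = "\<lambda>w. ?muS x (fst (D S T w)) * ?muT y (snd (D S T w))"
  have key: "(\<Sum>z\<in>iv (rle ?I) (H ?I) ?xy w. ?muI ?xy z) = (\<Sum>z\<in>iv (rle ?I) (H ?I) ?xy w. ?h2 z)"
    if w: "rle ?I ?xy w" for w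
  proof -
    obtain a b where ab: "rle S x a" "rle T y b" "w = m S T a b" using rle_split[OF fS fT dST x y w] by blast
    have aH: "a \<in> H S" using po_dom[OF poS ab(1)] by blast
    have bH: "b \<in> H T" using po_dom[OF poT ab(2)] by blast
    have ivI: "iv (rle ?I) (H ?I) ?xy w = (\<lambda>(a', b'). m S T a' b') ` (iv (rle S) (H S) x a \<times> iv (rle T) (H T) y b)"
    proof
      show "iv (rle ?I) (H ?I) ?xy w \<subseteq> (\<lambda>(a', b'). m S T a' b') ` (iv (rle S) (H S) x a \<times> iv (rle T) (H T) y b)"
      proof
        fix z assume z: "z \<in> iv (rle ?I) (H ?I) ?xy w"
        then have z1: "rle ?I ?xy z" and z2: "rle ?I z w" unfolding iv_def by auto
        obtain a' b' where ab': "rle S x a'" "rle T y b'" "z = m S T a' b'" using rle_split[OF fS fT dST x y z1] by blast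
        have a'H: "a' \<in> H S" using po_dom[OF poS ab'(1)] by blast
        have b'H: "b' \<in> H T" using po_dom[OF poT ab'(2)] by blast
        have "rle S a' a \<and> rle T b' b" using z2 ab(3) ab'(3) rle_prod_iff[OF fS fT dST a'H b'H aH bH] by simp
        then have "(a', b') \<in> iv (rle S) (H S) x a \<times> iv (rle T) (H T) y b"
          using ab' a'H b'H unfolding iv_def by auto
        then show "z \<in> (\<lambda>(a', b'). m S T a' b') ` (iv (rle S) (H S) x a \<times> iv (rle T) (H T) y b)"
          using ab'(3) by force
      qed
    next
      show "(\<lambda>(a', b'). m S T a' b') ` (iv (rle S) (H S) x a \<times> iv (rle T) (H T) y b) \<subseteq> iv (rle ?I) (H ?I) ?xy w"
      proof
        fix z assume "z \<in> (\<lambda>(a', b'). m S T a' b') ` (iv (rle S) (H S) x a \<times> iv (rle T) (H T) y b)"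
        then obtain a' b' where ab': "a' \<in> H S" "b' \<in> H T" "rle S x a'" "rle S a' a" "rle T y b'" "rle T b' b"
          "z = m S T a' b'" unfolding iv_def by auto
        have "m S T a' b' \<in> H ?I" using m_closed[OF fS fT dST ab'(1,2)] .
        moreover have "rle ?I ?xy (m S T a' b')" using rle_mult[OF fS fT dST ab'(3) ab'(5)] .
        moreover have "rle ?I (m S T a' b') w" using rle_mult[OF fS fT dST ab'(4) ab'(6)] ab(3) by simp
        ultimately show "z \<in> iv (rle ?I) (H ?I) ?xy w" using ab'(7) unfolding iv_def by simp
      qed
    qed
    have inj: "inj_on (\<lambda>(a', b'). m S T a' b') (iv (rle S) (H S) x a \<times> iv (rle T) (H T) y b)"
    proof (rule inj_onI)
      fix p q assume p: "p \<in> iv (rle S) (H S) x a \<times> iv (rle T) (H T) y b"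
        and q: "q \<in> iv (rle S) (H S) x a \<times> iv (rle T) (H T) y b"
        and eq: "(\<lambda>(a', b'). m S T a' b') p = (\<lambda>(a', b'). m S T a' b') q"
      obtain p1 p2 q1 q2 where pq: "p = (p1, p2)" "q = (q1, q2)" by fastforce
      have "p1 \<in> H S" "p2 \<in> H T" "q1 \<in> H S" "q2 \<in> H T" using p q pq unfolding iv_def by auto
      then show "p = q" using m_inj[OF fS fT dST] eq pq by auto
    qed
    have "(\<Sum>z\<in>iv (rle ?I) (H ?I) ?xy w. ?h2 z)
        = (\<Sum>p\<in>iv (rle S) (H S) x a \<times> iv (rle T) (H T) y b. ?h2 ((\<lambda>(a', b'). m S T a' b') p))"
      unfolding ivI by (rule sum.reindex[OF inj, unfolded comp_def])
    also have "\<dots> = (\<Sum>p\<in>iv (rle S) (H S) x a \<times> iv (rle T) (H T) y b. ?muS x (fst p) * ?muT y (snd p))"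
    proof (rule sum.cong)
      fix p assume p: "p \<in> iv (rle S) (H S) x a \<times> iv (rle T) (H T) y b"
      obtain p1 p2 where pq: "p = (p1, p2)" by fastforce
      have "p1 \<in> H S" "p2 \<in> H T" using p pq unfolding iv_def by auto
      then show "?h2 ((\<lambda>(a', b'). m S T a' b') p) = ?muS x (fst p) * ?muT y (snd p)"
        using D_m[OF fS fT dST] pq by simp
    qed simp
    also have "\<dots> = (\<Sum>a'\<in>iv (rle S) (H S) x a. ?muS x a') * (\<Sum>b'\<in>iv (rle T) (H T) y b. ?muT y b')"
      by (simp add: sum_product sum.cartesian_product case_prod_beta)
    also have "\<dots> = (if x = a then 1 else 0) * (if y = b then 1 else 0)"
      using moebius_sum[OF poS ab(1)] moebius_sum[OF poT ab(2)] by simp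
    also have "\<dots> = (if ?xy = w then 1 else 0)"
      using m_inj[OF fS fT dST x y aH bH] ab(3) by auto
    also have "\<dots> = (\<Sum>z\<in>iv (rle ?I) (H ?I) ?xy w. ?muI ?xy z)"
      using moebius_sum[OF poI w] by simp
    finally show ?thesis by simp
  qed
  have aH: "a \<in> H S" using po_dom[OF poS xa] by blast
  have bH: "b \<in> H T" using po_dom[OF poT yb] by blast
  have "?muI ?xy (m S T a b) = ?h2 (m S T a b)"
    using sum_unique[OF poI key rle_mult[OF fS fT dST xa yb]] by blast
  then show ?thesis using D_m[OF fS fT dST aH bH] by simp
qed

end



context shm begin

lemma main_loc:
  assumes fS: "finite S" and fT: "finite T" and dST: "S \<inter> T = {}" and x: "x \<in> H S" and y: "y \<in> H T"
  shows "kmult H m S T (omega H m D S x :: 'e \<Rightarrow> 'k::field_char_0) (omega H m D T y)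
           = omega H m D (S \<union> T) (m S T x y)"
proof
  fix w
  let ?I = "S \<union> T"
  let ?xy = "m S T x y"
  let ?ox = "omega H m D S x :: 'e \<Rightarrow> 'k"
  let ?oy = "omega H m D T y :: 'e \<Rightarrow> 'k"
  have fI: "finite ?I" using fS fT by simp
  have poI: "po (rle ?I) (H ?I)" using rle_po[OF fI] .
  have poS: "po (rle S) (H S)" using rle_po[OF fS] .
  have poT: "po (rle T) (H T)" using rle_po[OF fT] .
  have finST: "finite (H S \<times> H T)" using finH fS fT by simp
  show "kmult H m S T ?ox ?oy w = omega H m D ?I ?xy w"
  proof (cases "\<exists>a0\<in>H S. \<exists>b0\<in>H T. m S T a0 b0 = w")
    case True
    then obtain a0 b0 where ab0: "a0 \<in> H S" "b0 \<in> H T" "m S T a0 b0 = w" by blast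
    have "kmult H m S T ?ox ?oy w = (\<Sum>p\<in>H S \<times> H T. if p = (a0, b0) then ?ox a0 * ?oy b0 else 0)"
      unfolding kmult_def
    proof (rule sum.cong)
      fix p assume p: "p \<in> H S \<times> H T"
      obtain a b where pq: "p = (a, b)" by fastforce
      have ab: "a \<in> H S" "b \<in> H T" using p pq by auto
      have "m S T a b = w \<longleftrightarrow> (a, b) = (a0, b0)"
        using m_inj[OF fS fT dST ab ab0(1,2)] ab0(3) by auto
      then show "(case p of (a, b) \<Rightarrow> if m S T a b = w then ?ox a * ?oy b else 0) =
           (if p = (a0, b0) then ?ox a0 * ?oy b0 else 0)" using pq by auto
    qed simp
    also have "\<dots> = ?ox a0 * ?oy b0" using finST ab0 by simp
    also have "\<dots> = omega H m D ?I ?xy w"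
    proof (cases "rle S x a0 \<and> rle T y b0")
      case True
      then have le: "rle ?I ?xy w" using rle_mult[OF fS fT dST] ab0(3) by blast
      have wI: "w \<in> H ?I" using po_dom[OF poI le] by blast
      have "?ox a0 * ?oy b0 = of_int (moebius (rle S) (H S) x a0) * of_int (moebius (rle T) (H T) y b0)"
        using True ab0 unfolding omega_def by simp
      also have "\<dots> = of_int (moebius (rle ?I) (H ?I) ?xy w)"
        using mob_prod[OF fS fT dST x y] True ab0(3) by (metis of_int_mult)
      also have "\<dots> = omega H m D ?I ?xy w" using le wI unfolding omega_def by simp
      finally show ?thesis .
    next
      case False
      then have "?ox a0 * ?oy b0 = 0" unfolding omega_def by auto
      moreover have "\<not> rle ?I ?xy w"
        using rle_prod_iff[OF fS fT dST x y ab0(1,2)] False ab0(3) by simp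
      ultimately show ?thesis unfolding omega_def by simp
    qed
    finally show ?thesis .
  next
    case False
    have "kmult H m S T ?ox ?oy w = 0"
      unfolding kmult_def by (rule sum.neutral) (use False in auto)
    moreover have "\<not> rle ?I ?xy w"
    proof
      assume "rle ?I ?xy w"
      then obtain a b where ab: "rle S x a" "rle T y b" "w = m S T a b" using rle_split[OF fS fT dST x y] by blast
      have "a \<in> H S" using po_dom[OF poS ab(1)] by blast
      moreover have "b \<in> H T" using po_dom[OF poT ab(2)] by blast
      ultimately show False using False ab(3) by blast
    qed
    ultimately show ?thesis unfolding omega_def by simp
  qed
qed

end

theorem mainTheorem12:
  fixes H :: "'l set \<Rightarrow> 'e set"
    and rl :: "('l \<Rightarrow> 'l) \<Rightarrow> 'l set \<Rightarrow> 'e \<Rightarrow> 'e"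
    and m :: "'l set \<Rightarrow> 'l set \<Rightarrow> 'e \<Rightarrow> 'e \<Rightarrow> 'e"
    and D :: "'l set \<Rightarrow> 'l set \<Rightarrow> 'e \<Rightarrow> 'e \<times> 'e"
    and S T :: "'l set" and x y :: 'e
  assumes "set_hopf_monoid H rl m D"
    and "commutative_shm H m"
    and "cocommutative_shm H D"
    and "finite S" and "finite T" and "S \<inter> T = {}"
    and "x \<in> H S" and "y \<in> H T"
  shows "kmult H m S T (omega H m D S x :: 'e \<Rightarrow> 'k::field_char_0) (omega H m D T y)
           = omega H m D (S \<union> T) (m S T x y)"
proof -
  interpret shm H rl m D using assms(1,2) by unfold_locales
  show ?thesis using main_loc assms(4-8) by blast
qed

end
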